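(* Let $F(\lambda,\mu)=\left(\frac{2\lambda^2}{4-\mu^2},\ \mu+\frac{\mu\lambda^2}{4-\mu^2}\right)$, $\phi(\lambda,\mu)=\frac{4-\lambda^2+\mu^2}{4\mu}$, $\psi(\lambda,\mu)=\frac{4-\mu^2+\lambda^2}{4\lambda}$. Fix $\eta\in\mathbb{C}$ with $\eta^2\neq1$, a square root $s$ of $\eta^2-1$, and let $H_\eta=\{(\lambda,\mu):4-\lambda^2+\mu^2=4\eta\mu\}$. Define $\varphi_\eta\colon H_\eta\dashrightarrow\mathbb{P}^1$ by $$\varphi_\eta(\lambda,\mu)=\frac{2-\lambda-\eta\mu-s\mu}{-2+\lambda+\eta\mu-s\mu}.$$ Then $\varphi_\eta$ is birational from $H_\eta$ to $\mathbb{P}^1$, $F$ maps $H_\eta$ into itself, and for generic $p\in H_\eta$: $$\varphi_\eta(F(p))=\varphi_\eta(p)^2,\qquad \psi(p)=\tfrac12\left(\varphi_\eta(p)+\varphi_\eta(p)^{-1}\right).$$ *)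

theory Defs
  imports Complex_Main "HOL-Computational_Algebra.Polynomial"
begin

definition F_map :: "complex \<times> complex \<Rightarrow> complex \<times> complex" where
  "F_map p = (case p of (l, m) \<Rightarrow>
     (2 * l^2 / (4 - m^2), m + m * l^2 / (4 - m^2)))"

text \<open>F is defined where its denominator does not vanish.\<close>
definition F_den :: "complex \<times> complex \<Rightarrow> complex" where
  "F_den p = (case p of (l, m) \<Rightarrow> 4 - m^2)"

definition psi_fun :: "complex \<times> complex \<Rightarrow> complex" where
  "psi_fun p = (case p of (l, m) \<Rightarrow> (4 - m^2 + l^2) / (4 * l))"

definition H_curve :: "complex \<Rightarrow> (complex \<times> complex) set" where
  "H_curve \<eta> = {(l, m). 4 - l^2 + m^2 = 4 * \<eta> * m}"

text \<open>The map varphi_eta, with values in the affine chart of P^1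
  (its value is infinity exactly where the denominator vanishes).\<close>
definition varphi_num :: "complex \<Rightarrow> complex \<Rightarrow> complex \<times> complex \<Rightarrow> complex" where
  "varphi_num \<eta> s p = (case p of (l, m) \<Rightarrow> 2 - l - \<eta> * m - s * m)"

definition varphi_den :: "complex \<Rightarrow> complex \<Rightarrow> complex \<times> complex \<Rightarrow> complex" where
  "varphi_den \<eta> s p = (case p of (l, m) \<Rightarrow> -2 + l + \<eta> * m - s * m)"

definition varphi :: "complex \<Rightarrow> complex \<Rightarrow> complex \<times> complex \<Rightarrow> complex" where
  "varphi \<eta> s p = varphi_num \<eta> s p / varphi_den \<eta> s p"

text \<open>A property holds for generic points of a set (curve) S: it fails only on a
  finite subset (for an irreducible curve, a proper Zariski-closed subset).\<close>
definition generic_on :: "'a set \<Rightarrow> ('a \<Rightarrow> bool) \<Rightarrow> bool" where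
  "generic_on S P \<longleftrightarrow> finite {x \<in> S. \<not> P x}"

definition rational_fun :: "(complex \<Rightarrow> complex) \<Rightarrow> bool" where
  "rational_fun f \<longleftrightarrow> (\<exists>P Q :: complex poly. Q \<noteq> 0 \<and> (\<forall>t. f t = poly P t / poly Q t))"

definition varphi_birational :: "complex \<Rightarrow> complex \<Rightarrow> bool" where
  "varphi_birational \<eta> s \<longleftrightarrow>
     (\<exists>g1 g2. rational_fun g1 \<and> rational_fun g2 \<and>
        generic_on (H_curve \<eta>)
          (\<lambda>p. varphi_den \<eta> s p \<noteq> 0 \<and> (g1 (varphi \<eta> s p), g2 (varphi \<eta> s p)) = p) \<and>
        generic_on UNIV
          (\<lambda>t. (g1 t, g2 t) \<in> H_curve \<eta> \<and> varphi_den \<eta> s (g1 t, g2 t) \<noteq> 0 \<and>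
               varphi \<eta> s (g1 t, g2 t) = t))"

end

theory Submission
  imports Defs
begin

lemma fin_sq: "finite {x::complex. x^2 = c}"
proof -
  have "{x::complex. x^2 = c} \<subseteq> {csqrt c, - csqrt c}"
    using power2_eq_iff[of _ "csqrt c"] by auto
  thus ?thesis by (rule finite_subset) simp
qed

lemma fin_snd: "finite {p \<in> H_curve \<eta>. snd p = c}"
proof -
  have "{p \<in> H_curve \<eta>. snd p = c} \<subseteq> (\<lambda>l. (l, c)) ` {l. l^2 = 4 + c^2 - 4*\<eta>*c}"
  proof
    fix p assume "p \<in> {p \<in> H_curve \<eta>. snd p = c}"
    then obtain l where "p = (l, c)" "4 - l^2 + c^2 = 4*\<eta>*c"
      by (cases p) (auto simp: H_curve_def)
    thus "p \<in> (\<lambda>l. (l, c)) ` {l. l^2 = 4 + c^2 - 4*\<eta>*c}"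
      by (auto simp: algebra_simps)
  qed
  thus ?thesis using fin_sq by (rule finite_subset[OF _ finite_imageI])
qed

lemma fin_fst: "finite {p \<in> H_curve \<eta>. fst p = c}"
proof -
  have "{p \<in> H_curve \<eta>. fst p = c} \<subseteq> (\<lambda>x. (c, x + 2*\<eta>)) ` {x. x^2 = c^2 - 4 + 4*\<eta>^2}"
  proof
    fix p assume "p \<in> {p \<in> H_curve \<eta>. fst p = c}"
    then obtain m where p: "p = (c, m)" and e: "4 - c^2 + m^2 = 4*\<eta>*m"
      by (cases p) (auto simp: H_curve_def)
    have "(m - 2*\<eta>)^2 = c^2 - 4 + 4*\<eta>^2" using e
      by (simp add: power2_eq_square algebra_simps)
    thus "p \<in> (\<lambda>x. (c, x + 2*\<eta>)) ` {x. x^2 = c^2 - 4 + 4*\<eta>^2}"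
      using p by (intro image_eqI[of _ _ "m - 2*\<eta>"]) auto
  qed
  thus ?thesis using fin_sq by (rule finite_subset[OF _ finite_imageI])
qed

lemma I1: fixes l m \<eta> s :: complex
  assumes "4 - l^2 + m^2 = 4*\<eta>*m" "s^2 = \<eta>^2 - 1"
  shows "(2*(4-m^2) - 2*l^2 - (\<eta>+s)* m *(4-m^2+l^2)) * (-2 + l + (\<eta>-s)*m)^2
       = (-2*(4-m^2) + 2*l^2 + (\<eta>-s)* m *(4-m^2+l^2)) * (2 - l - (\<eta>+s)*m)^2"
  using assms by algebra
lemma I2: fixes l m \<eta> s :: complex
  assumes "4 - l^2 + m^2 = 4*\<eta>*m" "s^2 = \<eta>^2 - 1"
  shows "(4-m^2+l^2) * 2 * ((2 - l - (\<eta>+s)*m) * (-2 + l + (\<eta>-s)*m)) = 4*l*((2 - l - (\<eta>+s)*m)^2 + (-2 + l + (\<eta>-s)*m)^2)"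
  using assms by algebra
lemma I3: fixes l m \<eta> s :: complex
  assumes "4 - l^2 + m^2 = 4*\<eta>*m"
  shows "4*(4-m^2)^2 - (2*l^2)^2 + (m*(4-m^2+l^2))^2 = 4*\<eta>*(m*(4-m^2+l^2))*(4-m^2)"
  using assms by algebra
lemma I4: fixes t \<eta> s :: complex
  assumes "s^2 = \<eta>^2 - 1"
  shows "4*((\<eta>+s) - (\<eta>-s)*t^2)^2 - (4*s*t)^2 + (2*(1-t^2))^2 = 4*\<eta>*(2*(1-t^2))*((\<eta>+s) - (\<eta>-s)*t^2)"
  using assms by algebra
lemma J1: fixes l m \<eta> s :: complex
  assumes "4 - l^2 + m^2 = 4*\<eta>*m" "s^2 = \<eta>^2 - 1" 
  shows "(\<eta>+s)*(-2 + l + (\<eta>-s)*m)^2 - (\<eta>-s)*(2 - l - (\<eta>+s)*m)^2 = -4*s*((-2 + l + (\<eta>-s)*m) - (2 - l - (\<eta>+s)*m))"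
  using assms by algebra
lemma J2: fixes l m \<eta> s :: complex
  assumes "4 - l^2 + m^2 = 4*\<eta>*m" "s^2 = \<eta>^2 - 1" 
  shows "(2 - l - (\<eta>+s)*m) * (-2 + l + (\<eta>-s)*m) = l * ((2 - l - (\<eta>+s)*m) - (-2 + l + (\<eta>-s)*m))"
  using assms by algebra
lemma J3: fixes l m \<eta> s :: complex
  assumes "4 - l^2 + m^2 = 4*\<eta>*m" "s^2 = \<eta>^2 - 1" 
  shows "(2 - l - (\<eta>+s)*m) + (-2 + l + (\<eta>-s)*m) = -2*s*m"
  by (simp add: algebra_simps)

lemma Yzero: fixes l m \<eta> s :: complex
  assumes "4 - l^2 + m^2 = 4*\<eta>*m" "s^2 = \<eta>^2 - 1" "-2 + l + (\<eta>-s)*m = 0"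
  shows "m * (2*s*((\<eta>-s)*m - 2)) = 0"
  using assms by algebra
lemma Xzero: fixes l m \<eta> s :: complex
  assumes "4 - l^2 + m^2 = 4*\<eta>*m" "s^2 = \<eta>^2 - 1" "2 - l - (\<eta>+s)*m = 0"
  shows "m * (2*s*((\<eta>+s)*m - 2)) = 0"
  using assms by algebra
lemma YXzero: fixes l m \<eta> s :: complex
  assumes "4 - l^2 + m^2 = 4*\<eta>*m" "l - 2 + \<eta>*m = 0"
  shows "(1 - \<eta>^2) * m^2 = 0"
  using assms by algebra

lemma aux1: fixes A B D :: complex assumes "D \<noteq> 0"
  shows "4 - (A/D)^2 + (B/D)^2 = (4*D^2 - A^2 + B^2)/D^2"
  using assms by (simp add: field_simps power2_eq_square)
lemma aux2: fixes c B D :: complex assumes "D \<noteq> 0"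
  shows "(c*B*D)/D^2 = c*(B/D)"
  using assms by (simp add: field_simps power2_eq_square)

lemma part2:
  assumes "p \<in> H_curve \<eta>" "F_den p \<noteq> 0"
  shows "F_map p \<in> H_curve \<eta>"
proof -
  obtain l m where p: "p = (l, m)" by (cases p)
  have h: "4 - l^2 + m^2 = 4*\<eta>*m" using assms(1) p by (simp add: H_curve_def)
  have D: "4 - m^2 \<noteq> 0" using assms(2) p by (simp add: F_den_def)
  have e1: "m + m*l^2/(4-m^2) = m*(4-m^2+l^2)/(4-m^2)" using D by (simp add: field_simps)
  have "4 - (2*l^2/(4-m^2))^2 + (m*(4-m^2+l^2)/(4-m^2))^2 = 4*\<eta>*(m*(4-m^2+l^2)/(4-m^2))"
  proof -
    have "4 - (2*l^2/(4-m^2))^2 + (m*(4-m^2+l^2)/(4-m^2))^2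
        = (4*(4-m^2)^2 - (2*l^2)^2 + (m*(4-m^2+l^2))^2) / (4-m^2)^2"
      using D by (rule aux1)
    also have "\<dots> = (4*\<eta>*(m*(4-m^2+l^2))*(4-m^2)) / (4-m^2)^2" using I3[OF h] by simp
    also have "\<dots> = 4*\<eta>*(m*(4-m^2+l^2)/(4-m^2))" using D by (rule aux2)
    finally show ?thesis .
  qed
  thus ?thesis using p e1 by (simp add: F_map_def H_curve_def)
qed

lemma aux3: fixes D l e s m :: complex assumes "D \<noteq> 0"
  shows "2 - 2*l^2/D - e*(m + m*l^2/D) - s*(m + m*l^2/D) = (2*D - 2*l^2 - (e+s)*m*(D+l^2))/D"
  using assms by (simp add: field_simps)
lemma aux4: fixes D l e s m :: complex assumes "D \<noteq> 0"
  shows "-2 + 2*l^2/D + e*(m + m*l^2/D) - s*(m + m*l^2/D) = (-2*D + 2*l^2 + (e-s)*m*(D+l^2))/D"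
  using assms by (simp add: field_simps)

lemma part3_pt:
  fixes l m \<eta> s :: complex
  assumes h: "4 - l^2 + m^2 = 4*\<eta>*m" and hs: "s^2 = \<eta>^2 - 1" and s0: "s \<noteq> 0"
    and m0: "m \<noteq> 0" and D: "4 - m^2 \<noteq> 0" and bm: "(\<eta>-s)*m \<noteq> 2" and am: "(\<eta>+s)*m \<noteq> 2"
    and l0: "l \<noteq> 0"
  shows "varphi \<eta> s (F_map (l,m)) = (varphi \<eta> s (l,m))^2 \<and>
         psi_fun (l,m) = (1/2) * (varphi \<eta> s (l,m) + inverse (varphi \<eta> s (l,m)))"
proof -
  define X where "X = 2 - l - (\<eta>+s)*m"
  define Y where "Y = -2 + l + (\<eta>-s)*m"
  have Y0: "Y \<noteq> 0"
  proof
    assume "Y = 0"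
    hence "m * (2*s*((\<eta>-s)*m - 2)) = 0" using Yzero[OF h hs] Y_def by simp
    thus False using m0 s0 bm by simp
  qed
  have X0: "X \<noteq> 0"
  proof
    assume "X = 0"
    hence "m * (2*s*((\<eta>+s)*m - 2)) = 0" using Xzero[OF h hs] X_def by simp
    thus False using m0 s0 am by simp
  qed
  define xf where "xf = 2*(4-m^2) - 2*l^2 - (\<eta>+s)* m *(4-m^2+l^2)"
  define yf where "yf = -2*(4-m^2) + 2*l^2 + (\<eta>-s)* m *(4-m^2+l^2)"
  have I1': "xf * Y^2 = yf * X^2" using I1[OF h hs] unfolding xf_def yf_def X_def Y_def .
  have yf0: "yf \<noteq> 0"
  proof
    assume yf: "yf = 0"
    hence "xf = 0" using I1' Y0 by simp
    hence "xf + yf = 0" using yf by simp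
    hence "(-2*s) * (m * (4-m^2+l^2)) = 0" unfolding xf_def yf_def by (simp add: algebra_simps)
    hence E: "4-m^2+l^2 = 0" using s0 m0 by simp
    hence "xf = 2*(4-m^2) - 2*l^2" unfolding xf_def by simp
    hence "2*(l^2 - (4 - m^2)) = 0" using \<open>xf = 0\<close> by (simp add: algebra_simps)
    hence "l^2 = 4 - m^2" by (metis eq_iff_diff_eq_0 mult_eq_0_iff zero_neq_numeral)
    thus False using E D by simp
  qed
  have numF: "varphi_num \<eta> s (F_map (l,m)) = xf/(4-m^2)"
    using aux3[OF D, where l=l and e=\<eta> and s=s and m=m] unfolding varphi_num_def F_map_def xf_def by simp
  have denF: "varphi_den \<eta> s (F_map (l,m)) = yf/(4-m^2)"
    using aux4[OF D, where l=l and e=\<eta> and s=s and m=m] unfolding varphi_den_def F_map_def yf_def by simp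
  have vp: "varphi \<eta> s (l,m) = X/Y"
    unfolding varphi_def varphi_num_def varphi_den_def X_def Y_def by (simp add: algebra_simps)
  have 1: "varphi \<eta> s (F_map (l,m)) = (varphi \<eta> s (l,m))^2"
  proof -
    have "varphi \<eta> s (F_map (l,m)) = xf/yf" unfolding varphi_def numF denF using D by simp
    also have "\<dots> = X^2/Y^2" using I1' yf0 Y0 by (simp add: frac_eq_eq mult.commute)
    finally show ?thesis using vp by (simp add: power_divide)
  qed
  have I2': "(4-m^2+l^2) * 2 * (X * Y) = 4*l*(X^2 + Y^2)"
    using I2[OF h hs] unfolding X_def Y_def .
  have 2: "psi_fun (l,m) = (1/2) * (X/Y + inverse (X/Y))"
  proof -
    have "psi_fun (l,m) = (4-m^2+l^2)/(4*l)" by (simp add: psi_fun_def)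
    also have "\<dots> = (1/2) * (X/Y + Y/X)"
      using X0 Y0 l0 I2' by (simp add: field_simps power2_eq_square)
    finally show ?thesis by simp
  qed
  show ?thesis using 1 2 vp by simp
qed

lemma aux5: fixes X Y a b c :: complex assumes "Y \<noteq> 0" "a*Y^2 - b*X^2 \<noteq> 0"
  shows "c*(X/Y)/(a - b*(X/Y)^2) = c*X*Y/(a*Y^2 - b*X^2)"
    and "c*(1-(X/Y)^2)/(a - b*(X/Y)^2) = c*(Y^2-X^2)/(a*Y^2 - b*X^2)"
proof -
  have e: "a - b*(X/Y)^2 = (a*Y^2 - b*X^2)/Y^2" using assms(1) by (simp add: field_simps)
  have e2: "1 - (X/Y)^2 = (Y^2 - X^2)/Y^2" using assms(1) by (simp add: field_simps)
  show "c*(X/Y)/(a - b*(X/Y)^2) = c*X*Y/(a*Y^2 - b*X^2)"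
    unfolding e using assms by (simp add: field_simps power2_eq_square)
  show "c*(1-(X/Y)^2)/(a - b*(X/Y)^2) = c*(Y^2-X^2)/(a*Y^2 - b*X^2)"
    unfolding e e2 using assms by (simp add: field_simps power2_eq_square)
qed

lemma part1a:
  fixes l m \<eta> s :: complex
  assumes h: "4 - l^2 + m^2 = 4*\<eta>*m" and hs: "s^2 = \<eta>^2 - 1" and s0: "s \<noteq> 0"
    and m0: "m \<noteq> 0" and bm: "(\<eta>-s)*m \<noteq> 2" and et: "\<eta>^2 \<noteq> 1"
  shows "varphi_den \<eta> s (l,m) \<noteq> 0 \<and>
     (4*s*(varphi \<eta> s (l,m))/((\<eta>+s) - (\<eta>-s)*(varphi \<eta> s (l,m))^2),
      2*(1-(varphi \<eta> s (l,m))^2)/((\<eta>+s) - (\<eta>-s)*(varphi \<eta> s (l,m))^2)) = (l,m)"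
proof -
  define X where "X = 2 - l - (\<eta>+s)*m"
  define Y where "Y = -2 + l + (\<eta>-s)*m"
  have Y0: "Y \<noteq> 0"
  proof
    assume "Y = 0"
    hence "m * (2*s*((\<eta>-s)*m - 2)) = 0" using Yzero[OF h hs] Y_def by simp
    thus False using m0 s0 bm by simp
  qed
  have YX: "Y - X \<noteq> 0"
  proof
    assume "Y - X = 0"
    moreover have "Y - X = 2*(l - 2 + \<eta>*m)" unfolding X_def Y_def by (simp add: algebra_simps)
    ultimately have "2*(l - 2 + \<eta>*m) = 0" by simp
    hence "l - 2 + \<eta>*m = 0" by (metis mult_eq_0_iff zero_neq_numeral)
    hence "(1 - \<eta>^2) * m^2 = 0" using YXzero[OF h] by simp
    thus False using m0 et by simp
  qed
  have K: "(\<eta>+s)*Y^2 - (\<eta>-s)*X^2 = -4*s*(Y - X)" using J1[OF h hs] unfolding X_def Y_def .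
  have K0: "(\<eta>+s)*Y^2 - (\<eta>-s)*X^2 \<noteq> 0" using K YX s0 by simp
  have vp: "varphi \<eta> s (l,m) = X/Y"
    unfolding varphi_def varphi_num_def varphi_den_def X_def Y_def by (simp add: algebra_simps)
  have vd: "varphi_den \<eta> s (l,m) = Y"
    unfolding varphi_den_def Y_def by (simp add: algebra_simps)
  have J2': "X*Y = l*(X - Y)" using J2[OF h hs] unfolding X_def Y_def .
  have J3': "X + Y = -2*s*m" using J3[OF h hs] unfolding X_def Y_def .
  have g1: "4*s*(X/Y)/((\<eta>+s) - (\<eta>-s)*(X/Y)^2) = l"
  proof -
    have "4*s*(X/Y)/((\<eta>+s) - (\<eta>-s)*(X/Y)^2) = 4*s*X*Y/((\<eta>+s)*Y^2 - (\<eta>-s)*X^2)"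
      by (rule aux5(1)[OF Y0 K0])
    also have "\<dots> = (l * (-4*s*(Y - X))) / (-4*s*(Y - X))"
    proof -
      have "4*s*X*Y = l * (-4*s*(Y - X))" using J2' by algebra
      thus ?thesis unfolding K by (simp only:)
    qed
    also have "\<dots> = l" using YX s0 by simp
    finally show ?thesis .
  qed
  have g2: "2*(1-(X/Y)^2)/((\<eta>+s) - (\<eta>-s)*(X/Y)^2) = m"
  proof -
    have "2*(1-(X/Y)^2)/((\<eta>+s) - (\<eta>-s)*(X/Y)^2) = 2*(Y^2-X^2)/((\<eta>+s)*Y^2 - (\<eta>-s)*X^2)"
      by (rule aux5(2)[OF Y0 K0])
    also have "Y^2 - X^2 = (Y - X)*(X + Y)" by (simp add: power2_eq_square algebra_simps)
    also have "2*((Y - X)*(X + Y)) = m * (-4*s*(Y - X))" unfolding J3' by (simp add: algebra_simps)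
    also have "m * (-4*s*(Y - X)) / ((\<eta>+s)*Y^2 - (\<eta>-s)*X^2) = m" unfolding K using YX s0 by simp
    finally show ?thesis .
  qed
  show ?thesis using vp vd g1 g2 Y0 by simp
qed

lemma aux6: fixes Q A B e s :: complex assumes "Q \<noteq> 0"
  shows "2 - A/Q - e*(B/Q) - s*(B/Q) = (2*Q - A - (e+s)*B)/Q"
    and "-2 + A/Q + e*(B/Q) - s*(B/Q) = (-2*Q + A + (e-s)*B)/Q"
  using assms by (simp_all add: field_simps)

lemma part1b:
  fixes t \<eta> s :: complex
  assumes hs: "s^2 = \<eta>^2 - 1" and s0: "s \<noteq> 0" and t1: "t \<noteq> 1"
    and Q0: "(\<eta>+s) - (\<eta>-s)*t^2 \<noteq> 0"
  shows "(4*s*t/((\<eta>+s) - (\<eta>-s)*t^2), 2*(1-t^2)/((\<eta>+s) - (\<eta>-s)*t^2)) \<in> H_curve \<eta> \<and>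
     varphi_den \<eta> s (4*s*t/((\<eta>+s) - (\<eta>-s)*t^2), 2*(1-t^2)/((\<eta>+s) - (\<eta>-s)*t^2)) \<noteq> 0 \<and>
     varphi \<eta> s (4*s*t/((\<eta>+s) - (\<eta>-s)*t^2), 2*(1-t^2)/((\<eta>+s) - (\<eta>-s)*t^2)) = t"
proof -
  define Q where "Q = (\<eta>+s) - (\<eta>-s)*t^2"
  have Q: "Q \<noteq> 0" using Q0 Q_def by simp
  have H: "4 - (4*s*t/Q)^2 + (2*(1-t^2)/Q)^2 = 4*\<eta>*(2*(1-t^2)/Q)"
  proof -
    have "4 - (4*s*t/Q)^2 + (2*(1-t^2)/Q)^2 = (4*Q^2 - (4*s*t)^2 + (2*(1-t^2))^2)/Q^2"
      by (rule aux1[OF Q])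
    also have "\<dots> = (4*\<eta>*(2*(1-t^2))*Q)/Q^2" using I4[OF hs] unfolding Q_def by simp
    also have "\<dots> = 4*\<eta>*(2*(1-t^2)/Q)" by (rule aux2[OF Q])
    finally show ?thesis .
  qed
  have num: "varphi_num \<eta> s (4*s*t/Q, 2*(1-t^2)/Q) = (4*s*t*(t-1))/Q"
  proof -
    have "varphi_num \<eta> s (4*s*t/Q, 2*(1-t^2)/Q) = (2*Q - 4*s*t - (\<eta>+s)*(2*(1-t^2)))/Q"
      unfolding varphi_num_def using aux6(1)[OF Q] by simp
    also have "2*Q - 4*s*t - (\<eta>+s)*(2*(1-t^2)) = 4*s*t*(t-1)"
      unfolding Q_def by (simp add: algebra_simps power2_eq_square)
    finally show ?thesis .
  qed
  have den: "varphi_den \<eta> s (4*s*t/Q, 2*(1-t^2)/Q) = (4*s*(t-1))/Q"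
  proof -
    have "varphi_den \<eta> s (4*s*t/Q, 2*(1-t^2)/Q) = (-2*Q + 4*s*t + (\<eta>-s)*(2*(1-t^2)))/Q"
      unfolding varphi_den_def using aux6(2)[OF Q] by simp
    also have "-2*Q + 4*s*t + (\<eta>-s)*(2*(1-t^2)) = 4*s*(t-1)"
      unfolding Q_def by (simp add: algebra_simps power2_eq_square)
    finally show ?thesis .
  qed
  have d0: "4*s*(t-1)/Q \<noteq> 0" using s0 t1 Q by simp
  have "varphi \<eta> s (4*s*t/Q, 2*(1-t^2)/Q) = t"
    unfolding varphi_def num den using s0 t1 Q by (simp add: field_simps)
  thus ?thesis using H den d0 unfolding Q_def[symmetric] by (simp add: H_curve_def)
qed

lemma fin_snd_set: "finite S \<Longrightarrow> finite {p \<in> H_curve \<eta>. snd p \<in> S}"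
proof -
  assume S: "finite S"
  have "{p \<in> H_curve \<eta>. snd p \<in> S} = (\<Union>c\<in>S. {p \<in> H_curve \<eta>. snd p = c})" by auto
  thus ?thesis using S fin_snd by simp
qed

theorem lemma5p7:
  fixes \<eta> s :: complex
  assumes "\<eta>^2 \<noteq> 1" and "s^2 = \<eta>^2 - 1"
  shows "varphi_birational \<eta> s
    \<and> (\<forall>p \<in> H_curve \<eta>. F_den p \<noteq> 0 \<longrightarrow> F_map p \<in> H_curve \<eta>)
    \<and> generic_on (H_curve \<eta>)
        (\<lambda>p. varphi \<eta> s (F_map p) = (varphi \<eta> s p)^2 \<and>
             psi_fun p = (1/2) * (varphi \<eta> s p + inverse (varphi \<eta> s p)))"
proof -
  have s0: "s \<noteq> 0" using assms by auto
  have ab: "(\<eta>+s)*(\<eta>-s) = 1" using assms(2) by (simp add: algebra_simps power2_eq_square)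
  hence a0: "\<eta>+s \<noteq> 0" and b0: "\<eta>-s \<noteq> 0" by auto
  define g1 where "g1 = (\<lambda>t::complex. 4*s*t/((\<eta>+s) - (\<eta>-s)*t^2))"
  define g2 where "g2 = (\<lambda>t::complex. 2*(1-t^2)/((\<eta>+s) - (\<eta>-s)*t^2))"
  have r1: "rational_fun g1" unfolding rational_fun_def g1_def
    by (rule exI[of _ "[:0, 4*s:]"], rule exI[of _ "[:\<eta>+s, 0, -(\<eta>-s):]"])
       (use a0 in \<open>auto simp: algebra_simps power2_eq_square\<close>)
  have r2: "rational_fun g2" unfolding rational_fun_def g2_def
    by (rule exI[of _ "[:2, 0, -2:]"], rule exI[of _ "[:\<eta>+s, 0, -(\<eta>-s):]"])
       (use a0 in \<open>auto simp: algebra_simps power2_eq_square\<close>)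
  let ?S = "{0, 2, -2, 2/(\<eta>-s), 2/(\<eta>+s)} :: complex set"
  have gA: "generic_on (H_curve \<eta>)
          (\<lambda>p. varphi_den \<eta> s p \<noteq> 0 \<and> (g1 (varphi \<eta> s p), g2 (varphi \<eta> s p)) = p)"
    unfolding generic_on_def
  proof (rule finite_subset[OF _ fin_snd_set[of ?S \<eta>]])
    show "{p \<in> H_curve \<eta>. \<not> (varphi_den \<eta> s p \<noteq> 0 \<and> (g1 (varphi \<eta> s p), g2 (varphi \<eta> s p)) = p)}
        \<subseteq> {p \<in> H_curve \<eta>. snd p \<in> ?S}"
    proof
      fix p assume pA: "p \<in> {p \<in> H_curve \<eta>. \<not> (varphi_den \<eta> s p \<noteq> 0 \<and> (g1 (varphi \<eta> s p), g2 (varphi \<eta> s p)) = p)}"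
      obtain l m where p: "p = (l, m)" by (cases p)
      have H: "(l, m) \<in> H_curve \<eta>" using pA p by simp
      have n: "\<not> (varphi_den \<eta> s (l, m) \<noteq> 0 \<and> (g1 (varphi \<eta> s (l, m)), g2 (varphi \<eta> s (l, m))) = (l, m))"
        using pA p by simp
      have h: "4 - l^2 + m^2 = 4*\<eta>*m" using H by (simp add: H_curve_def)
      have "m \<in> ?S"
      proof (rule ccontr)
        assume "m \<notin> ?S"
        hence m0: "m \<noteq> 0" and bm: "(\<eta>-s)*m \<noteq> 2" using b0 by (auto simp: field_simps)
        show False using part1a[OF h assms(2) s0 m0 bm assms(1)] n unfolding g1_def g2_def by simp
      qed
      thus "p \<in> {p \<in> H_curve \<eta>. snd p \<in> ?S}" using H p by simp
    qed
  qed simp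
  have gB: "generic_on UNIV
          (\<lambda>t. (g1 t, g2 t) \<in> H_curve \<eta> \<and> varphi_den \<eta> s (g1 t, g2 t) \<noteq> 0 \<and>
               varphi \<eta> s (g1 t, g2 t) = t)"
    unfolding generic_on_def
  proof (rule finite_subset)
    show "{t \<in> UNIV. \<not> ((g1 t, g2 t) \<in> H_curve \<eta> \<and> varphi_den \<eta> s (g1 t, g2 t) \<noteq> 0 \<and>
               varphi \<eta> s (g1 t, g2 t) = t)} \<subseteq> {1} \<union> {t. t^2 = (\<eta>+s)/(\<eta>-s)}"
    proof
      fix t assume tA: "t \<in> {t \<in> UNIV. \<not> ((g1 t, g2 t) \<in> H_curve \<eta> \<and> varphi_den \<eta> s (g1 t, g2 t) \<noteq> 0 \<and>
               varphi \<eta> s (g1 t, g2 t) = t)}"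
      hence n: "\<not> ((g1 t, g2 t) \<in> H_curve \<eta> \<and> varphi_den \<eta> s (g1 t, g2 t) \<noteq> 0 \<and>
               varphi \<eta> s (g1 t, g2 t) = t)" by simp
      show "t \<in> {1} \<union> {t. t^2 = (\<eta>+s)/(\<eta>-s)}"
      proof (rule ccontr)
        assume "t \<notin> {1} \<union> {t. t^2 = (\<eta>+s)/(\<eta>-s)}"
        hence t1: "t \<noteq> 1" and t2: "t^2 \<noteq> (\<eta>+s)/(\<eta>-s)" by auto
        have Q0: "(\<eta>+s) - (\<eta>-s)*t^2 \<noteq> 0" using t2 b0 by (auto simp: field_simps)
        from part1b[OF assms(2) s0 t1 Q0] n show False unfolding g1_def g2_def by simp
      qed
    qed
    show "finite ({1} \<union> {t. t^2 = (\<eta>+s)/(\<eta>-s)})" using fin_sq by simp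
  qed
  have P1: "varphi_birational \<eta> s" unfolding varphi_birational_def
    using r1 r2 gA gB by blast
  have P2: "\<forall>p \<in> H_curve \<eta>. F_den p \<noteq> 0 \<longrightarrow> F_map p \<in> H_curve \<eta>" using part2 by blast
  have P3: "generic_on (H_curve \<eta>)
        (\<lambda>p. varphi \<eta> s (F_map p) = (varphi \<eta> s p)^2 \<and>
             psi_fun p = (1/2) * (varphi \<eta> s p + inverse (varphi \<eta> s p)))"
    unfolding generic_on_def
  proof (rule finite_subset[OF _ finite_UnI[OF fin_snd_set[of ?S \<eta>] fin_fst[of \<eta> 0]]])
    show "{p \<in> H_curve \<eta>. \<not> (varphi \<eta> s (F_map p) = (varphi \<eta> s p)^2 \<and>
             psi_fun p = (1/2) * (varphi \<eta> s p + inverse (varphi \<eta> s p)))}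
        \<subseteq> {p \<in> H_curve \<eta>. snd p \<in> ?S} \<union> {p \<in> H_curve \<eta>. fst p = 0}"
    proof
      fix p assume pA: "p \<in> {p \<in> H_curve \<eta>. \<not> (varphi \<eta> s (F_map p) = (varphi \<eta> s p)^2 \<and>
             psi_fun p = (1/2) * (varphi \<eta> s p + inverse (varphi \<eta> s p)))}"
      obtain l m where p: "p = (l, m)" by (cases p)
      have H: "(l, m) \<in> H_curve \<eta>" using pA p by simp
      have n: "\<not> (varphi \<eta> s (F_map (l,m)) = (varphi \<eta> s (l,m))^2 \<and>
             psi_fun (l,m) = (1/2) * (varphi \<eta> s (l,m) + inverse (varphi \<eta> s (l,m))))"
        using pA p by simp
      have h: "4 - l^2 + m^2 = 4*\<eta>*m" using H by (simp add: H_curve_def)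
      show "p \<in> {p \<in> H_curve \<eta>. snd p \<in> ?S} \<union> {p \<in> H_curve \<eta>. fst p = 0}"
      proof (rule ccontr)
        assume nn: "p \<notin> {p \<in> H_curve \<eta>. snd p \<in> ?S} \<union> {p \<in> H_curve \<eta>. fst p = 0}"
        hence l0: "l \<noteq> 0" and ns: "m \<notin> ?S" using H p by auto
        hence m0: "m \<noteq> 0" and bm: "(\<eta>-s)*m \<noteq> 2" and am: "(\<eta>+s)*m \<noteq> 2"
          using a0 b0 by (auto simp: field_simps)
        have D: "4 - m^2 \<noteq> 0"
        proof
          assume "4 - m^2 = 0"
          hence "(m - 2)*(m + 2) = 0" by (simp add: algebra_simps power2_eq_square)
          thus False using ns by (auto simp: add_eq_0_iff2)
        qed
        show False using part3_pt[OF h assms(2) s0 m0 D bm am l0] n by simp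
      qed
    qed
  qed simp
  show ?thesis using P1 P2 P3 by blast
qed

end
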